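(* Let $n\ge 2$, $1\le r\le n-1$, and let $p(q)=q^n+a_rq^r+a_{r-1}q^{r-1}+\dots+a_1q+a_0$ with $a_0,\dots,a_r\in\mathbb{H}$ and $a_r\neq 0$. Put $\lambda=\big(\max_{0\le j\le r}|a_j|\big)^{1/n}$. Then every zero $q\in\mathbb{H}$ of $p$ satisfies $$|q|\le \lambda+\lambda^2+\dots+\lambda^{r+1}.$$
   Context: $\mathbb{H}$ denotes the real quaternions with the Euclidean norm $|q|=\sqrt{q\bar q}$. The polynomial $p$ (whose coefficients of $q^{r+1},\dots,q^{n-1}$ vanish) has coefficients written to the left of the powers and is evaluated at $q\in\mathbb{H}$ by direct substitution, $p(q)=q^n+a_rq^r+\dots+a_1q+a_0$; a zero of $p$ is a $q\in\mathbb{H}$ with $p(q)=0$. *)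

theory Defs
  imports Complex_Main
begin

text \<open>The real quaternions H, represented by their four real coordinates
  q = Re + Im1 i + Im2 j + Im3 k, with the Hamilton product (i^2 = j^2 = k^2 = ijk = -1).\<close>

datatype quat = Quat (qRe: real) (qIm1: real) (qIm2: real) (qIm3: real)

definition qzero :: quat where "qzero = Quat 0 0 0 0"
definition qone :: quat where "qone = Quat 1 0 0 0"

definition qadd :: "quat \<Rightarrow> quat \<Rightarrow> quat" where
  "qadd p q = Quat (qRe p + qRe q) (qIm1 p + qIm1 q) (qIm2 p + qIm2 q) (qIm3 p + qIm3 q)"

definition qmult :: "quat \<Rightarrow> quat \<Rightarrow> quat" where
  "qmult p q = Quat
     (qRe p * qRe q - qIm1 p * qIm1 q - qIm2 p * qIm2 q - qIm3 p * qIm3 q)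
     (qRe p * qIm1 q + qIm1 p * qRe q + qIm2 p * qIm3 q - qIm3 p * qIm2 q)
     (qRe p * qIm2 q - qIm1 p * qIm3 q + qIm2 p * qRe q + qIm3 p * qIm1 q)
     (qRe p * qIm3 q + qIm1 p * qIm2 q - qIm2 p * qIm1 q + qIm3 p * qRe q)"

definition qnorm :: "quat \<Rightarrow> real" where
  "qnorm q = sqrt ((qRe q)\<^sup>2 + (qIm1 q)\<^sup>2 + (qIm2 q)\<^sup>2 + (qIm3 q)\<^sup>2)"

primrec qpow :: "quat \<Rightarrow> nat \<Rightarrow> quat" where
  "qpow q 0 = qone"
| "qpow q (Suc m) = qmult q (qpow q m)"

definition qpoly_eval :: "nat \<Rightarrow> nat \<Rightarrow> (nat \<Rightarrow> quat) \<Rightarrow> quat \<Rightarrow> quat" where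
  "qpoly_eval n r a q = qadd (qpow q n) (foldr (\<lambda>j acc. qadd (qmult (a j) (qpow q j)) acc) [0..<Suc r] qzero)"

end

theory Submission imports Defs "HOL-Analysis.Analysis" begin
lemma qnorm_mult: "qnorm (qmult p q) = qnorm p * qnorm q"
proof -
  have "(qRe (qmult p q))\<^sup>2 + (qIm1 (qmult p q))\<^sup>2 + (qIm2 (qmult p q))\<^sup>2 + (qIm3 (qmult p q))\<^sup>2
      = ((qRe p)\<^sup>2 + (qIm1 p)\<^sup>2 + (qIm2 p)\<^sup>2 + (qIm3 p)\<^sup>2) * ((qRe q)\<^sup>2 + (qIm1 q)\<^sup>2 + (qIm2 q)\<^sup>2 + (qIm3 q)\<^sup>2)"
    unfolding qmult_def by simp algebra
  thus ?thesis unfolding qnorm_def by (simp add: real_sqrt_mult)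
qed
definition qv :: "quat \<Rightarrow> (real \<times> real) \<times> (real \<times> real)" where
  "qv p = ((qRe p, qIm1 p), (qIm2 p, qIm3 p))"
lemma qnorm_qv: "qnorm p = norm (qv p)"
  unfolding qnorm_def qv_def norm_Pair by (simp add: add.assoc)
lemma qnorm_add: "qnorm (qadd p q) \<le> qnorm p + qnorm q"
proof -
  have "qv (qadd p q) = qv p + qv q" by (simp add: qv_def qadd_def)
  thus ?thesis by (simp add: qnorm_qv norm_triangle_ineq)
qed
lemma qnorm_zero: "qnorm qzero = 0" by (simp add: qnorm_def qzero_def)
lemma qnorm_one: "qnorm qone = 1" by (simp add: qnorm_def qone_def)
lemma qnorm_pow: "qnorm (qpow q n) = qnorm q ^ n"
  by (induction n) (simp_all add: qnorm_one qnorm_mult)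
lemma qnorm_nonneg: "qnorm p \<ge> 0" by (simp add: qnorm_def)
lemma qadd_zero: "qadd p q = qzero \<Longrightarrow> qnorm p = qnorm q"
  by (cases p; cases q) (simp add: qadd_def qzero_def qnorm_def add_eq_0_iff)
lemma foldr_bound:
  "qnorm (foldr (\<lambda>j acc. qadd (qmult (a j) (qpow q j)) acc) xs qzero)
     \<le> sum_list (map (\<lambda>j. qnorm (a j) * qnorm q ^ j) xs)"
proof (induction xs)
  case Nil then show ?case by (simp add: qnorm_zero)
next
  case (Cons x xs)
  then show ?case using qnorm_add[of "qmult (a x) (qpow q x)"]
    by (simp add: qnorm_mult qnorm_pow) (smt (verit))
qed
lemma real_bound:
  fixes x l :: real and n r :: nat
  assumes x: "x \<ge> 0" and l: "l > 0" and rn: "r + 1 \<le> n"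
    and h: "x ^ n \<le> l ^ n * (\<Sum>j=0..r. x ^ j)"
  shows "x \<le> (\<Sum>k=1..r+1. l ^ k)"
proof (rule ccontr)
  assume "\<not> ?thesis"
  hence xs: "x > (\<Sum>k=1..r+1. l ^ k)" by simp
  define T where "T = (\<Sum>j=0..r. l ^ j)"
  have S: "(\<Sum>k=1..r+1. l ^ k) = l * T"
    unfolding T_def sum_distrib_left
    by (rule sum.reindex_bij_witness[where i="\<lambda>k. k+1" and j="\<lambda>k. k - 1"]) (auto simp flip: power_Suc dest: Suc_le_D)
  have T1: "T \<ge> 1" unfolding T_def
  proof -
    have "(\<Sum>j=0..r. l ^ j) = 1 + (\<Sum>j=1..r. l ^ j)" by (simp add: sum.atLeast_Suc_atMost)
    moreover have "(\<Sum>j=1..r. l ^ j) \<ge> 0" using l by (simp add: sum_nonneg)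
    ultimately show "(\<Sum>j=0..r. l ^ j) \<ge> 1" by simp
  qed
  define t where "t = x / l"
  have xt: "x = l * t" using l by (simp add: t_def)
  have tT: "t > T" using xs S xt l by simp
  have t1: "t > 1" using tT T1 by simp
  have "(\<Sum>j=0..r. l ^ j * t ^ j) \<le> (\<Sum>j=0..r. l ^ j * t ^ r)"
    by (rule sum_mono) (use l t1 in \<open>auto intro!: mult_left_mono power_increasing\<close>)
  also have "\<dots> = T * t ^ r" by (simp add: T_def sum_distrib_right)
  also have "\<dots> < t * t ^ r" using tT t1 by simp
  also have "\<dots> = t ^ (r+1)" by simp
  also have "\<dots> \<le> t ^ n" using t1 rn by (intro power_increasing) auto
  finally have "(\<Sum>j=0..r. l ^ j * t ^ j) < t ^ n" .
  hence "l ^ n * (\<Sum>j=0..r. l ^ j * t ^ j) < l ^ n * t ^ n" using l by simp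
  also have "l ^ n * t ^ n = x ^ n" by (simp add: xt power_mult_distrib)
  also have "(\<Sum>j=0..r. l ^ j * t ^ j) = (\<Sum>j=0..r. x ^ j)" by (simp add: xt power_mult_distrib)
  finally show False using h by simp
qed
lemma qnorm_pos: "p \<noteq> qzero \<Longrightarrow> qnorm p > 0"
proof -
  assume "p \<noteq> qzero"
  hence "qv p \<noteq> 0" by (cases p) (auto simp: qv_def qzero_def zero_prod_def)
  thus ?thesis by (simp add: qnorm_qv)
qed

theorem theorem3:
  fixes n r :: nat and a :: "nat \<Rightarrow> quat" and q :: quat
  assumes "n \<ge> 2" and "1 \<le> r" and "r \<le> n - 1"
    and "a r \<noteq> qzero"
    and "qpoly_eval n r a q = qzero"
  shows "qnorm q \<le> (\<Sum>k=1..r+1. (root n (Max ((\<lambda>j. qnorm (a j)) ` {0..r}))) ^ k)"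
proof -
  define M where "M = Max ((\<lambda>j. qnorm (a j)) ` {0..r})"
  define x where "x = qnorm q"
  have Mge: "\<And>j. j \<in> {0..r} \<Longrightarrow> qnorm (a j) \<le> M" unfolding M_def by (rule Max_ge) auto
  have Mpos: "M > 0" using Mge[of r] qnorm_pos[OF assms(4)] by simp
  define l where "l = root n M"
  have n0: "n > 0" using assms(1) by simp
  have lpos: "l > 0" using Mpos n0 by (simp add: l_def)
  have ln: "l ^ n = M" using Mpos n0 by (simp add: l_def real_root_pow_pos2)
  have "x ^ n = qnorm (foldr (\<lambda>j acc. qadd (qmult (a j) (qpow q j)) acc) [0..<Suc r] qzero)"
    using qadd_zero[OF assms(5)[unfolded qpoly_eval_def]] by (simp add: qnorm_pow x_def)
  also have "\<dots> \<le> sum_list (map (\<lambda>j. qnorm (a j) * x ^ j) [0..<Suc r])"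
    unfolding x_def by (rule foldr_bound)
  also have "\<dots> = (\<Sum>j=0..r. qnorm (a j) * x ^ j)"
    by (simp only: sum_set_upt_conv_sum_list_nat[symmetric] set_upt atLeastLessThanSuc_atLeastAtMost)
  also have "\<dots> \<le> (\<Sum>j=0..r. M * x ^ j)"
    by (rule sum_mono) (use Mge in \<open>auto intro!: mult_right_mono simp: x_def qnorm_nonneg\<close>)
  also have "\<dots> = l ^ n * (\<Sum>j=0..r. x ^ j)" by (simp add: ln sum_distrib_left)
  finally have "x ^ n \<le> l ^ n * (\<Sum>j=0..r. x ^ j)" .
  from real_bound[OF _ lpos _ this] assms(3) assms(1)
  show ?thesis by (simp add: x_def qnorm_nonneg l_def M_def)
qed
end
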